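(* Let $f_j$, $j\in J=\{1,\dots,m\}$, be functions on $\mathbb{R}^n$, each strongly convex with constant $\mu_j>0$; let $D=\{x: f_j(x)\le 0,\ j\in J\}$ satisfy the Slater condition; let $f$ be a convex function attaining its minimum on $D$, such that no point of absolute minimum of $f$ on $\mathbb{R}^n$ (if one exists) lies in $\operatorname{int}D$. Let $x^*$ be the (unique) solution of $\min\{f(x):x\in D\}$, $F(x)=\max_{j\in J} f_j(x)$, $\mu=\min_{j\in J}\mu_j$, and for $\varepsilon\ge0$ let $D_\varepsilon=\{x\in\mathbb{R}^n: F(x)\le\varepsilon\}$. Let $\varepsilon>0$ and let $y\in D_\varepsilon$, $y\ne x^*$, be such that for every $\alpha\in(0,1]$ the point $z=\alpha y+(1-\alpha)x^*$ satisfies $F(z)>0$. Then $\|y-x^*\|\le\sqrt{\varepsilon/\mu}$.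
   Context: Each set $D_j=\{x:f_j(x)\le0\}$ is assumed to have nonempty interior. *)

theory Defs
  imports "HOL-Analysis.Analysis"
begin

text \<open>Strong convexity with constant c (convention without the factor 1/2):
  f(t x + (1-t) y) \<le> t f(x) + (1-t) f(y) - c t (1-t) |x-y|^2.\<close>
definition strongly_convex_on :: "'a::real_normed_vector set \<Rightarrow> ('a \<Rightarrow> real) \<Rightarrow> real \<Rightarrow> bool" where
  "strongly_convex_on S g c \<longleftrightarrow> convex S \<and>
     (\<forall>x\<in>S. \<forall>y\<in>S. \<forall>t\<in>{0..1}.
        g (t *\<^sub>R x + (1 - t) *\<^sub>R y) \<le> t * g x + (1 - t) * g y - c * t * (1 - t) * (norm (x - y))\<^sup>2)"

end

theory Submission
  imports Defs
begin

theorem lemma1p1p6: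
  fixes fs :: "nat \<Rightarrow> 'a::euclidean_space \<Rightarrow> real"
    and mus :: "nat \<Rightarrow> real"
    and f :: "'a \<Rightarrow> real"
    and m :: nat and xstar y :: 'a and \<epsilon> :: real
  defines "D \<equiv> {x. \<forall>j\<in>{1..m}. fs j x \<le> 0}"
      and "F \<equiv> (\<lambda>x. Max ((\<lambda>j. fs j x) ` {1..m}))"
      and "\<mu> \<equiv> Min (mus ` {1..m})"
  assumes m: "m \<ge> 1"
      and sc: "\<forall>j\<in>{1..m}. mus j > 0 \<and> strongly_convex_on UNIV (fs j) (mus j)"
      and Dj_int: "\<forall>j\<in>{1..m}. interior {x. fs j x \<le> 0} \<noteq> {}"
      and slater: "\<exists>x. \<forall>j\<in>{1..m}. fs j x < 0"
      and fconv: "convex_on UNIV f"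
      and nomin: "\<forall>x. (\<forall>z. f x \<le> f z) \<longrightarrow> x \<notin> interior D"
      and xstar: "xstar \<in> D" "\<forall>x\<in>D. f xstar \<le> f x"
      and eps: "\<epsilon> > 0"
      and y: "F y \<le> \<epsilon>" "y \<noteq> xstar"
      and seg: "\<forall>\<alpha>\<in>{0<..1}. F (\<alpha> *\<^sub>R y + (1 - \<alpha>) *\<^sub>R xstar) > 0"
  shows "norm (y - xstar) \<le> sqrt (\<epsilon> / \<mu>)"
proof (rule ccontr)
  assume H: "\<not> norm (y - xstar) \<le> sqrt (\<epsilon> / \<mu>)"
  define d where "d = norm (y - xstar)"
  have fin: "finite (mus ` {1..m})" "mus ` {1..m} \<noteq> {}" using m by auto
  have mule: "\<And>j. j \<in> {1..m} \<Longrightarrow> \<mu> \<le> mus j" unfolding \<mu>_def using fin by simp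
  have "\<mu> \<in> mus ` {1..m}" unfolding \<mu>_def using fin Min_in by blast
  then have mupos: "\<mu> > 0" using sc by auto
  have dpos: "d \<ge> 0" unfolding d_def by simp
  have "sqrt (\<epsilon> / \<mu>) < d" using H d_def by simp
  then have "(sqrt (\<epsilon> / \<mu>))\<^sup>2 < d\<^sup>2" using eps mupos
    by (intro power_strict_mono) auto
  then have "\<epsilon> / \<mu> < d\<^sup>2" using eps mupos by simp
  then have big: "\<epsilon> < \<mu> * d\<^sup>2" using mupos by (simp add: field_simps)
  define t where "t = (\<mu> * d\<^sup>2 - \<epsilon>) / (2 * \<mu> * d\<^sup>2)"
  have dd: "\<mu> * d\<^sup>2 > 0" using big eps by linarith
  have t0: "t > 0" unfolding t_def using big dd by (simp add: field_simps)
  have t1: "t \<le> 1" unfolding t_def using big dd eps by (simp add: field_simps)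
  have key: "(1 - t) * (\<mu> * d\<^sup>2) > \<epsilon>"
  proof -
    define A where "A = \<mu> * d\<^sup>2"
    have tA: "t = (A - \<epsilon>) / (2 * A)" unfolding t_def A_def by simp
    have "(1 - t) * A = A - (A - \<epsilon>) / 2" proof -
      have "A > 0" using dd A_def by simp
      then show ?thesis unfolding tA by (simp add: field_simps)
    qed
    moreover have "\<epsilon> < A - (A - \<epsilon>) / 2" using big unfolding A_def[symmetric] by (simp add: field_simps)
    ultimately have "\<epsilon> < (1 - t) * A" by simp
    then show ?thesis unfolding A_def .
  qed
  define z where "z = t *\<^sub>R y + (1 - t) *\<^sub>R xstar"
  have finj: "finite ((\<lambda>j. fs j z) ` {1..m})" "(\<lambda>j. fs j z) ` {1..m} \<noteq> {}" using m by auto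
  have neg: "fs j z < 0" if j: "j \<in> {1..m}" for j
  proof -
    have scj: "strongly_convex_on UNIV (fs j) (mus j)" using sc j by auto
    have "fs j z \<le> t * fs j y + (1 - t) * fs j xstar - mus j * t * (1 - t) * d\<^sup>2"
      using scj t0 t1 unfolding strongly_convex_on_def z_def d_def by auto
    moreover have "fs j y \<le> \<epsilon>"
    proof -
      have "fs j y \<le> F y" unfolding F_def using j by (intro Max_ge) auto
      then show ?thesis using y by simp
    qed
    moreover have "fs j xstar \<le> 0" using xstar j unfolding D_def by auto
    moreover have "\<mu> * t * (1 - t) * d\<^sup>2 \<le> mus j * t * (1 - t) * d\<^sup>2"
      using mule[OF j] t0 t1 by (intro mult_right_mono) auto
    moreover have "t * \<epsilon> < t * ((1 - t) * (\<mu> * d\<^sup>2))" using key t0 by simp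
    moreover have "t * fs j y \<le> t * \<epsilon>" using calculation(2) t0 by (simp add: mult_left_mono)
    moreover have "(1 - t) * fs j xstar \<le> 0" using calculation(3) t1 by (simp add: mult_nonneg_nonpos)
    ultimately show ?thesis by (simp add: algebra_simps)
  qed
  have "F z \<in> (\<lambda>j. fs j z) ` {1..m}" unfolding F_def using finj Max_in by blast
  then have "F z < 0" using neg by auto
  moreover have "F z > 0" using seg t0 t1 unfolding z_def by auto
  ultimately show False by simp
qed

end
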